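(* For $n=0,1,2,\ldots$ let $R_n=\sum_{k=0}^n\binom{n}{k}\binom{n+k}{k}\frac{1}{2k-1}$. The sequence $\{R_n\}_{n=4}^\infty$ is strictly log-convex; equivalently, the sequence $\{R_{n+1}/R_n\}_{n=3}^\infty$ is strictly increasing.
   Context: A sequence $\{z_n\}$ of positive numbers is strictly log-convex if $z_{n-1}z_{n+1}>z_n^2$ for all indices $n$ for which $z_{n-1},z_n,z_{n+1}$ belong to the sequence. *)

theory Defs
  imports Complex_Main
begin

definition R :: "nat \<Rightarrow> real" where
  "R n = (\<Sum>k=0..n. real (n choose k) * real ((n + k) choose k) / (2 * real k - 1))"

definition strictly_log_convex_from :: "nat \<Rightarrow> (nat \<Rightarrow> real) \<Rightarrow> bool" where
  "strictly_log_convex_from m z \<longleftrightarrow>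
     (\<forall>n\<ge>m. z n > 0) \<and> (\<forall>n\<ge>m + 1. z (n - 1) * z (n + 1) > (z n)^2)"

end

theory Submission
  imports Defs
begin


definition T :: "real \<Rightarrow> nat \<Rightarrow> real" where
  "T x k = pochhammer (x - of_nat k + 1) (2*k) / ((fact k)^2 * (2 * of_nat k - 1))"

lemma choose_poch: "real (m choose k) = pochhammer (real m - real k + 1) k / fact k"
  by (simp add: binomial_gbinomial gbinomial_pochhammer')

lemma tT: "real (m choose k) * real ((m+k) choose k) / (2 * real k - 1) = T (real m) k"
proof -
  have "real ((m+k) choose k) = pochhammer (real m + 1) k / fact k"
    using choose_poch[of "m+k" k] by simp
  moreover have "pochhammer (real m - real k + 1) k * pochhammer (real m + 1) k
        = pochhammer (real m - real k + 1) (2*k)"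
    using pochhammer_product'[of "real m - real k + 1" k k] by (simp add: mult_2)
  ultimately show ?thesis unfolding T_def choose_poch[of m k]
    by (simp add: power2_eq_square)
qed

lemma poch3: "pochhammer (b::real) (p+q+r) = pochhammer b p * pochhammer (b + of_nat p) q * pochhammer (b + of_nat p + of_nat q) r"
  by (simp add: pochhammer_product' add.assoc)



definition G :: "nat \<Rightarrow> nat \<Rightarrow> real" where
  "G n k = (if k = 0 then 0 else 4 * real ((n+2) choose (k-1)) * real ((n+k) choose (k-1)))"

lemma G_Suc: "G n (Suc k) = 4 * (pochhammer (real n - real k + 3) k / fact k) * (pochhammer (real n + 2) k / fact k)"
proof -
  have "real ((n+2) choose k) = pochhammer (real n - real k + 3) k / fact k"
    using choose_poch[of "n+2" k] by (simp add: algebra_simps)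
  moreover have "real ((n+Suc k) choose k) = pochhammer (real n + 2) k / fact k"
    using choose_poch[of "n+Suc k" k] by (simp add: algebra_simps)
  ultimately show ?thesis unfolding G_def by simp
qed

lemma wz_big:
  fixes x :: real and j :: nat
  defines "a \<equiv> x - real j - 1"
  shows "(x+1) * T x (j+2) - (7*x+15) * T (x+1) (j+2) + (7*x+13) * T (x+2) (j+2) - (x+3) * T (x+3) (j+2)
     = 4 * (pochhammer (x - real (j+2) + 3) (j+2) / fact (j+2)) * (pochhammer (x + 2) (j+2) / fact (j+2))
     - 4 * (pochhammer (x - real (j+1) + 3) (j+1) / fact (j+1)) * (pochhammer (x + 2) (j+1) / fact (j+1))"
proof -
  define M where "M = pochhammer (a+3) (2*j+1)"
  define b where "b = a + 2*real j + 4"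
  define Fc where "Fc = (fact (j+1) :: real)"
  have Fc: "Fc > 0" unfolding Fc_def by simp
  have f2: "(fact (j+2) :: real) = (real j + 2) * Fc" unfolding Fc_def
    by (simp add: fact_Suc[of "Suc j"] del: fact_Suc) 
  have den: "(fact (j+2))^2 * (2 * real (j+2) - 1) = (real j + 2)^2 * Fc^2 * (2*real j+3)"
    unfolding f2 by (simp add: power2_eq_square algebra_simps)
  have e: "2 * (j+2) = 3 + (2*j+1) + 0" "2*(j+2) = 2 + (2*j+1) + 1" "2*(j+2) = 1 + (2*j+1) + 2"
     "2*(j+2) = 0 + (2*j+1) + 3" by simp_all
  have T0: "T x (j+2) = a*(a+1)*(a+2) * M / ((real j + 2)^2 * Fc^2 * (2*real j+3))"
  proof -
    have "pochhammer a (2*(j+2)) = a*(a+1)*(a+2) * M"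
      unfolding e(1) poch3 M_def by (simp add: pochhammer_Suc numeral_3_eq_3)
    moreover have "x - real (j+2) + 1 = a" unfolding a_def by simp
    ultimately show ?thesis unfolding T_def den by simp
  qed
  have T1: "T (x+1) (j+2) = (a+1)*(a+2)*b * M / ((real j + 2)^2 * Fc^2 * (2*real j+3))"
  proof -
    have "pochhammer (a+1) (2*(j+2)) = (a+1)*(a+2)*b * M"
      unfolding e(2) poch3 M_def b_def by (simp add: pochhammer_Suc numeral_2_eq_2 algebra_simps)
    moreover have "x + 1 - real (j+2) + 1 = a + 1" unfolding a_def by simp
    ultimately show ?thesis unfolding T_def den by simp
  qed
  have T2: "T (x+2) (j+2) = (a+2)*b*(b+1) * M / ((real j + 2)^2 * Fc^2 * (2*real j+3))"
  proof -
    have "pochhammer (a+2) (2*(j+2)) = (a+2)*b*(b+1) * M"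
      unfolding e(3) poch3 M_def b_def by (simp add: pochhammer_Suc numeral_2_eq_2 algebra_simps)
    moreover have "x + 2 - real (j+2) + 1 = a + 2" unfolding a_def by simp
    ultimately show ?thesis unfolding T_def den by (simp add: add.commute)
  qed
  have T3: "T (x+3) (j+2) = b*(b+1)*(b+2) * M / ((real j + 2)^2 * Fc^2 * (2*real j+3))"
  proof -
    have "pochhammer (a+3) (2*(j+2)) = b*(b+1)*(b+2) * M"
      unfolding e(4) poch3 M_def b_def by (simp add: pochhammer_Suc numeral_3_eq_3 algebra_simps)
    moreover have "x + 3 - real (j+2) + 1 = a + 3" unfolding a_def by simp
    ultimately show ?thesis unfolding T_def den by (simp add: add.commute)
  qed
  have core: "pochhammer (a+3) (j+1) * pochhammer (x+2) (j+1) = (x+2) * M"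
  proof -
    have "M = pochhammer (a+3) (j+1) * pochhammer (x+3) j"
    proof -
      have "2*j+1 = (j+1)+j" by simp
      then show ?thesis unfolding M_def using pochhammer_product'[of "a+3" "j+1" j]
        by (simp add: a_def algebra_simps mult_2_right)
    qed
    moreover have "pochhammer (x+2) (j+1) = (x+2) * pochhammer (x+3) j"
      by (simp add: pochhammer_rec algebra_simps)
    ultimately show ?thesis by simp
  qed
  have G1: "pochhammer (x - real (j+2) + 3) (j+2) * pochhammer (x + 2) (j+2) = (a+2)*b*(x+2)*M"
  proof -
    have "pochhammer (x - real (j+2) + 3) (j+2) = (a+2) * pochhammer (a+3) (j+1)"
      by (simp add: pochhammer_rec a_def algebra_simps)
    moreover have "pochhammer (x + 2) (j+2) = pochhammer (x+2) (j+1) * b"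
      by (simp add: pochhammer_Suc a_def b_def algebra_simps)
    ultimately show ?thesis using core by (simp add: algebra_simps)
  qed
  have G0: "pochhammer (x - real (j+1) + 3) (j+1) * pochhammer (x + 2) (j+1) = (x+2)*M"
    using core by (simp add: a_def algebra_simps)
  have rhs: "4 * (pochhammer (x - real (j+2) + 3) (j+2) / fact (j+2)) * (pochhammer (x + 2) (j+2) / fact (j+2))
     - 4 * (pochhammer (x - real (j+1) + 3) (j+1) / fact (j+1)) * (pochhammer (x + 2) (j+1) / fact (j+1))
     = 4*((a+2)*b*(x+2)*M) / ((real j + 2)^2 * Fc^2) - 4*((x+2)*M)/Fc^2"
  proof -
    have h: "\<And>p q f::real. 4*(p/f)*(q/f) = 4*(p*q)/f^2" by (simp add: power2_eq_square)
    show ?thesis unfolding h G1 G0 f2 Fc_def[symmetric] by (simp add: power_mult_distrib)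
  qed
  have xa: "x = a + real j + 1" unfolding a_def by simp
  have bb: "b = a + 2*real j + 4" by (rule b_def)
  have poly: "(x+1)*(a*(a+1)*(a+2)) - (7*x+15)*((a+1)*(a+2)*b) + (7*x+13)*((a+2)*b*(b+1)) - (x+3)*(b*(b+1)*(b+2))
     = (2*real j+3) * (4*(x+2)*((a+2)*b - (real j+2)^2))"
    unfolding xa bb by algebra
  define D where "D = (real j + 2)^2 * Fc^2 * (2*real j+3)"
  have D: "D \<noteq> 0" unfolding D_def using Fc by (simp add: add_pos_pos)
  have D2: "(real j + 2)^2 * Fc^2 \<noteq> 0" using Fc by simp
  have L: "(x+1) * T x (j+2) - (7*x+15) * T (x+1) (j+2) + (7*x+13) * T (x+2) (j+2) - (x+3) * T (x+3) (j+2)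
     = ((x+1)*(a*(a+1)*(a+2)) - (7*x+15)*((a+1)*(a+2)*b) + (7*x+13)*((a+2)*b*(b+1)) - (x+3)*(b*(b+1)*(b+2))) * M / D"
    unfolding T0 T1 T2 T3 D_def[symmetric] by (simp add: diff_divide_distrib add_divide_distrib algebra_simps)
  have Rr: "4*((a+2)*b*(x+2)*M) / ((real j + 2)^2 * Fc^2) - 4*((x+2)*M)/Fc^2
     = (4*(x+2)*((a+2)*b - (real j+2)^2)) * M / ((real j + 2)^2 * Fc^2)"
    using Fc D2 by (simp add: field_simps)
  have cancel: "\<And>c Y E::real. c \<noteq> 0 \<Longrightarrow> (c*Y)*M/(E*c) = Y*M/E" by simp
  have c3: "2*real j+3 \<noteq> 0" by (simp add: add_pos_pos)
  show ?thesis unfolding rhs L poly Rr D_def by (rule cancel[OF c3])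
qed



definition tt :: "nat \<Rightarrow> nat \<Rightarrow> real" where
  "tt m k = real (m choose k) * real ((m+k) choose k) / (2 * real k - 1)"

lemma wz:
  "real (n+1) * tt n k - real (7*n+15) * tt (n+1) k + real (7*n+13) * tt (n+2) k - real (n+3) * tt (n+3) k
   = G n (Suc k) - G n k"
proof -
  have tt: "tt (n+i) k = T (real n + real i) k" for i unfolding tt_def tT by simp
  have e: "real (n+1) * tt n k - real (7*n+15) * tt (n+1) k + real (7*n+13) * tt (n+2) k - real (n+3) * tt (n+3) k
      = (real n+1) * T (real n) k - (7*real n+15) * T (real n+1) k + (7*real n+13) * T (real n+2) k - (real n+3) * T (real n+3) k"
    using tt[of 0] tt[of 1] tt[of 2] tt[of 3] by simp
  show ?thesis
  proof (cases k)
    case 0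
    then show ?thesis unfolding e by (simp add: T_def G_def)
  next
    case (Suc k')
    show ?thesis
    proof (cases k')
      case 0
      have "G n 2 = 4 * (real n + 2)^2" unfolding G_def by (simp add: power2_eq_square algebra_simps)
      then show ?thesis unfolding e using Suc 0 
        by (simp add: T_def G_def numeral_2_eq_2 pochhammer_Suc power2_eq_square algebra_simps)
    next
      case (Suc j)
      have k: "k = j + 2" using Suc \<open>k = Suc k'\<close> by simp
      show ?thesis unfolding e unfolding k using wz_big[of "real n" j] G_Suc[of n "j+2"] G_Suc[of n "j+1"]
        by (simp add: add.commute)
    qed
  qed
qed

lemma R_ext: "R (n+i) = (\<Sum>k<n+4. tt (n+i) k)" if "i \<le> 3" for n i
proof -
  have "R (n+i) = (\<Sum>k<n+i+1. tt (n+i) k)" unfolding R_def tt_def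
    by (rule sum.cong) auto
  also have "\<dots> = (\<Sum>k<n+4. tt (n+i) k)"
    by (rule sum.mono_neutral_left) (use that in \<open>auto simp: tt_def\<close>)
  finally show ?thesis .
qed

lemma R_rec: "real (n+3) * R (n+3) = real (7*n+13) * R (n+2) - real (7*n+15) * R (n+1) + real (n+1) * R n"
proof -
  have r: "R (n+i) = (\<Sum>k<n+4. tt (n+i) k)" if "i \<le> 3" for i using R_ext that by blast
  have "real (n+1) * R n - real (7*n+15) * R (n+1) + real (7*n+13) * R (n+2) - real (n+3) * R (n+3)
     = (\<Sum>k<n+4. real (n+1) * tt n k - real (7*n+15) * tt (n+1) k + real (7*n+13) * tt (n+2) k - real (n+3) * tt (n+3) k)"
    using r[of 0] r[of 1] r[of 2] r[of 3]
    by (simp add: sum_distrib_left sum_subtractf sum.distrib)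
  also have "\<dots> = (\<Sum>k<n+4. G n (Suc k) - G n k)" unfolding wz ..
  also have "\<dots> = 0" unfolding sum_lessThan_telescope by (simp add: G_def)
  finally show ?thesis by simp
qed



lemma R_vals: "R 0 = -1" "R 1 = 1" "R 2 = 7" "R 3 = 25" "R 4 = 87" "R 5 = 329"
proof -
  show r0: "R 0 = -1" by (simp add: R_def)
  show r1: "R 1 = 1" by (simp add: R_def)
  show r2: "R 2 = 7" by (simp add: R_def numeral_2_eq_2)
  show r3: "R 3 = 25" using R_rec[of 0] r0 r1 r2 by (simp add: numeral_2_eq_2)
  show r4: "R 4 = 87" using R_rec[of 1] r1 r2 r3 by (simp add: numeral_eq_Suc)
  show "R 5 = 329" using R_rec[of 2] r2 r3 r4 by (simp add: numeral_eq_Suc)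
qed

definition S :: "nat \<Rightarrow> real" where "S n = R (n+1) - R n"
definition U :: "nat \<Rightarrow> real" where "U n = S (n+1) - S n"

lemma U_rec: "real (n+4) * U (n+2) = real (6*n+15) * U (n+1) - real (n+1) * U n"
proof -
  have a: "real (n+3) * R (n+3) = real (7*n+13) * R (n+2) - real (7*n+15) * R (n+1) + real (n+1) * R n"
    by (rule R_rec)
  have b: "real (n+4) * R (n+4) = real (7*n+20) * R (n+3) - real (7*n+22) * R (n+2) + real (n+2) * R (n+1)"
    using R_rec[of "n+1"] by (simp add: numeral_eq_Suc algebra_simps)
  show ?thesis unfolding U_def S_def using a b
    by (simp add: algebra_simps numeral_eq_Suc)
qed

lemma U_step:
  fixes x y z m :: real
  assumes m: "m \<ge> 0" and rec: "(m+4) * z = (6*m+15) * y - (m+1) * x"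
    and x: "x > 0" and xy: "y \<ge> x" and P: "(m+4)*y^2 - (6*m+15)*y*x + (m+1)*x^2 < 0"
  shows "x*z > y^2" "z \<ge> y" "(m+5)*z^2 - (6*m+21)*z*y + (m+2)*y^2 < 0"
proof -
  have "(m+4)*(x*z) = (6*m+15)*y*x - (m+1)*x^2"
    using arg_cong[OF rec, of "\<lambda>t. t*x"] by (simp add: algebra_simps power2_eq_square)
  then have "(m+4)*(x*z) > (m+4)*y^2" using P by linarith
  then show xz: "x*z > y^2" using m by (simp add: mult_less_cancel_left_pos)
  have y0: "y > 0" using x xy by linarith
  have "x*z > x*y" using xz xy x y0
    by (smt (verit, ccfv_SIG) mult_right_mono power2_eq_square)
  then show zy: "z \<ge> y" using x by simp
  have Q: "(m+4)*z^2 - (6*m+15)*y*z + (m+1)*y^2 = (m+1)*(y^2 - x*z)"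
    using arg_cong[OF rec, of "\<lambda>t. t*z"] by (simp add: algebra_simps power2_eq_square)
  have Qn: "(m+4)*z^2 - (6*m+15)*y*z + (m+1)*y^2 < 0"
    unfolding Q using xz m by (simp add: mult_pos_neg)
  have L: "z^2 - 6*y*z + y^2 < 0"
  proof (rule ccontr)
    assume "\<not> ?thesis"
    then have h: "z^2 - 6*y*z + y^2 \<ge> 0" by simp
    have "4*z^2 - 15*y*z + y^2 \<ge> 9*y*z - 3*y^2" using h by linarith
    moreover have "9*y*z - 3*y^2 > 0"
    proof -
      have "y*z \<ge> y*y" using zy y0 by (simp add: mult_left_mono)
      then show ?thesis using y0 by (simp add: power2_eq_square)
    qed
    moreover have "m*(z^2 - 6*y*z + y^2) \<ge> 0" using m h by simp
    ultimately have "(m+4)*z^2 - (6*m+15)*y*z + (m+1)*y^2 > 0"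
      by (simp add: algebra_simps) 
    then show False using Qn by linarith
  qed
  have "(m+5)*z^2 - (6*m+21)*z*y + (m+2)*y^2 = ((m+4)*z^2 - (6*m+15)*y*z + (m+1)*y^2) + (z^2 - 6*y*z + y^2)"
    by (simp add: algebra_simps)
  then show "(m+5)*z^2 - (6*m+21)*z*y + (m+2)*y^2 < 0" using Qn L by linarith
qed

lemma R_valsS: "R 0 = -1" "R (Suc 0) = 1" "R (Suc (Suc 0)) = 7" "R (Suc (Suc (Suc 0))) = 25"
   "R (Suc (Suc (Suc (Suc 0)))) = 87" "R (Suc (Suc (Suc (Suc (Suc 0))))) = 329"
  using R_vals by (simp_all add: numeral_eq_Suc)

lemma U_valsS: "U 0 = 4" "U (Suc 0) = 12" "U (Suc (Suc 0)) = 44" "S (Suc 0) = 6" "S (Suc (Suc 0)) = 18"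
   "S (Suc (Suc (Suc 0))) = 62" "S (Suc (Suc (Suc (Suc 0)))) = 242"
  by (simp_all add: U_def S_def R_valsS)

lemma U_vals: "U 0 = 4" "U 1 = 12" "U 2 = 44" "S 1 = 6" "S 2 = 18" "S 3 = 62" "S 4 = 242"
  using U_valsS by (simp_all add: numeral_eq_Suc)

lemma U_inv: "U n > 0 \<and> U (n+1) \<ge> U n \<and>
   (real n+4)*(U (n+1))^2 - (6*real n+15)*U (n+1)*U n + (real n+1)*(U n)^2 < 0"
proof (induction n)
  case 0
  then show ?case by (simp add: U_valsS)
next
  case (Suc n)
  have rec: "(real n+4) * U (n+2) = (6*real n+15) * U (n+1) - (real n+1) * U n"
    using U_rec[of n] by simp
  note st = U_step[of "real n" "U (n+2)" "U (n+1)" "U n", OF _ rec]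
  have "U n * U (n+2) > (U (n+1))^2" "U (n+2) \<ge> U (n+1)"
    "(real n+5)*(U (n+2))^2 - (6*real n+21)*U (n+2)*U (n+1) + (real n+2)*(U (n+1))^2 < 0"
    using st Suc by auto
  moreover have "U (n+1) > 0" using Suc by auto
  ultimately show ?case by (simp add: algebra_simps)
qed

lemma U_lc: "U n * U (n+2) \<ge> (U (n+1))^2"
proof -
  have rec: "(real n+4) * U (n+2) = (6*real n+15) * U (n+1) - (real n+1) * U n"
    using U_rec[of n] by simp
  show ?thesis using U_step(1)[of "real n" "U (n+2)" "U (n+1)" "U n", OF _ rec] U_inv[of n] by auto
qed

lemma psum:
  fixes a s :: "nat \<Rightarrow> real"
  assumes apos: "\<And>n. n \<ge> m \<Longrightarrow> a n > 0"
    and alc: "\<And>n. n \<ge> m \<Longrightarrow> a n * a (n+2) \<ge> (a (n+1))^2"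
    and srec: "\<And>n. s (n+1) = s n + a n"
    and s0: "s m > 0" and bs: "s m * a (m+1) > s (m+1) * a m"
  shows "n \<ge> m \<Longrightarrow> s n > 0 \<and> s n * a (n+1) > s (n+1) * a n"
proof (induction n rule: dec_induct)
  case base
  then show ?case using s0 bs by simp
next
  case (step n)
  have an: "a n > 0" "a (n+1) > 0" using apos step(1) by auto
  have s1: "s (n+1) > 0" using step.IH an srec[of n] by simp
  have s2: "s (n+2) = s (n+1) + a (n+1)" using srec[of "n+1"] by simp
  have "s (n+1) * a (n+2) * a n \<ge> s (n+1) * (a (n+1))^2"
    using alc[OF step(1)] s1 by (simp add: mult.assoc mult_left_mono mult.commute)
  moreover have "s (n+1) * (a (n+1))^2 > s (n+2) * a (n+1) * a n"
  proof -
    have "s (n+1) * a (n+1) - s (n+1) * a n - a (n+1) * a n = s n * a (n+1) - s (n+1) * a n"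
      using srec[of n] by (simp add: algebra_simps)
    then have "s (n+1) * a (n+1) - s (n+1) * a n - a (n+1) * a n > 0" using step.IH by simp
    then have "a (n+1) * (s (n+1) * a (n+1) - s (n+1) * a n - a (n+1) * a n) > 0"
      using an by simp
    then show ?thesis unfolding s2 by (simp add: algebra_simps power2_eq_square)
  qed
  ultimately have "s (n+1) * a (n+2) * a n > s (n+2) * a (n+1) * a n" by linarith
  then have "s (n+1) * a (n+2) > s (n+2) * a (n+1)" using an(1)
    by (simp add: mult_less_cancel_right_pos)
  then show ?case using s1 by (simp add: numeral_eq_Suc)
qed

lemma psum_lc:
  fixes a s :: "nat \<Rightarrow> real"
  assumes "\<And>n. s (n+1) = s n + a n" "s n * a (n+1) > s (n+1) * a n"
  shows "s n * s (n+2) > (s (n+1))^2"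
proof -
  have "s (n+2) = s (n+1) + a (n+1)" using assms(1)[of "n+1"] by simp
  then have "s n * s (n+2) - (s (n+1))^2 = s n * a (n+1) - s (n+1) * a n"
    using assms(1)[of n] by (simp add: algebra_simps power2_eq_square)
  then show ?thesis using assms(2) by linarith
qed

lemma S_main: "n \<ge> 1 \<Longrightarrow> S n > 0 \<and> S n * U (n+1) > S (n+1) * U n"
  by (rule psum[of 1 U S]) (use U_inv U_lc in \<open>auto simp: U_def U_valsS\<close>)

lemma S_lc: "n \<ge> 1 \<Longrightarrow> S n * S (n+2) \<ge> (S (n+1))^2"
  using psum_lc[of S U n] S_main[of n] by (simp add: U_def)

lemma R_main: "n \<ge> 3 \<Longrightarrow> R n > 0 \<and> R n * S (n+1) > R (n+1) * S n"
  by (rule psum[of 3 S R]) (use S_main S_lc in \<open>auto simp: S_def R_valsS U_valsS R_vals\<close>)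

lemma R_lc: "n \<ge> 3 \<Longrightarrow> R n * R (n+2) > (R (n+1))^2"
  using psum_lc[of R S n] R_main[of n] by (simp add: S_def)

theorem theorem4p1:
  shows "strictly_log_convex_from 4 R \<and>
         (\<forall>n\<ge>3. R (n + 1) / R n < R (n + 2) / R (n + 1))"
proof (intro conjI allI impI)
  show "strictly_log_convex_from 4 R" unfolding strictly_log_convex_from_def
  proof (intro conjI allI impI)
    fix n :: nat assume "n \<ge> 4" then show "R n > 0" using R_main by auto
  next
    fix n :: nat assume n: "n \<ge> 4 + 1"
    obtain m where m: "n = m + 1" using n by (metis add.commute le_add_diff_inverse2 add_leD2)
    have "R m * R (m+2) > (R (m+1))^2" using R_lc n m by auto
    then show "R (n-1) * R (n+1) > (R n)^2" using m by simp
  qed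
next
  fix n :: nat assume n: "n \<ge> 3"
  have p: "R n > 0" "R (n+1) > 0" using R_main n by auto
  have "R n * R (n+2) > R (n+1) * R (n+1)" using R_lc[OF n] by (simp add: power2_eq_square)
  then show "R (n + 1) / R n < R (n + 2) / R (n + 1)" using p
    by (simp add: divide_simps mult.commute)
qed

end
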